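(* Let $A$, $Q$, $H\subseteq A^Q$ be non-empty finite sets, $n\ge3$, and $\mathcal F$ a clone with carrier $A$ satisfying $\Delta^s_n$, and suppose $H\in\mathrm{Inv}_Q\mathcal F$. Let $p,q\in Q$, $a\in H(p)$, $|H(q)|\ge n$, and suppose $H$ weakly separates $p$ from $q$ at the point $a$. Then $H$ strongly separates $p$ from $q$ at the point $a$.
   Context: $\mathcal O(A)=\bigcup_{n<\omega}A^{A^n}$; $\mathcal F_{[n]}=\mathcal F\cap A^{A^n}$; $\mathrm{ran}\,\mathbf x$ is the set of entries of $\mathbf x\in A^n$; $A^n_k=\{\mathbf x\in A^n:|\mathrm{ran}\,\mathbf x|=k\}$, $A^n_{<n}=\bigcup_{k<n}A^n_k$. A clone with carrier $A$ is a subset of $\mathcal O(A)$ containing all projections and closed under composition. For $f\in\mathcal O(A)_{[m]}$, $h_i\in A^Q$, $f(h_0,\dots,h_{m-1})$ is $q\mapsto f(h_0(q)\dots h_{m-1}(q))$; $\mathrm{Inv}_Q\mathcal F$ is the set of $H\subseteq A^Q$ closed under such compositions with $f\in\mathcal F$. $H(q)=\{h(q):h\in H\}$. $\mathcal F$ satisfies $\Delta^s_n$ if there is $i<n$ such that for every $\mathbf a\in A^n_n$ and $a\in\mathrm{ran}\,\mathbf a$ there is $s\in\mathcal F_{[n]}$ with $s(\mathbf a)=a$ and $s(\mathbf x)=x_i$ for all $\mathbf x\in A^n_{<n}$. $H$ weakly separates $p$ from $q$ at $a\in H(p)$ if there are $h_1,h_2\in H$ with $h_1(p)=h_2(p)=a$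 and $h_1(q)\ne h_2(q)$; $H$ strongly separates $p$ from $q$ at $a$ if for every $b\in H(q)$ there is $h\in H$ with $h(p)=a$, $h(q)=b$. *)

theory Defs
  imports "HOL-Library.FuncSet"
begin

text \<open>An n-ary operation on A is represented as a function on lists, which maps
  every list of length n over A into A and is undefined elsewhere (extensional).
  A set of operations (e.g. a clone) is a set of pairs (arity, operation).\<close>

definition tuples :: "'a set \<Rightarrow> nat \<Rightarrow> 'a list set" where
  "tuples A n = {xs. length xs = n \<and> set xs \<subseteq> A}"

definition ops :: "'a set \<Rightarrow> nat \<Rightarrow> ('a list \<Rightarrow> 'a) set" where
  "ops A n = {f. (\<forall>xs \<in> tuples A n. f xs \<in> A) \<and> (\<forall>xs. xs \<notin> tuples A n \<longrightarrow> f xs = undefined)}"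

definition proj_op :: "'a set \<Rightarrow> nat \<Rightarrow> nat \<Rightarrow> ('a list \<Rightarrow> 'a)" where
  "proj_op A n i = (\<lambda>xs. if xs \<in> tuples A n then xs ! i else undefined)"

definition comp_op :: "'a set \<Rightarrow> nat \<Rightarrow> nat \<Rightarrow> ('a list \<Rightarrow> 'a) \<Rightarrow> (nat \<Rightarrow> 'a list \<Rightarrow> 'a) \<Rightarrow> ('a list \<Rightarrow> 'a)" where
  "comp_op A n m f g = (\<lambda>xs. if xs \<in> tuples A n then f (map (\<lambda>i. g i xs) [0..<m]) else undefined)"

definition clone :: "'a set \<Rightarrow> (nat \<times> ('a list \<Rightarrow> 'a)) set \<Rightarrow> bool" where
  "clone A F \<longleftrightarrow>
     (\<forall>(n, f) \<in> F. f \<in> ops A n) \<and>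
     (\<forall>n i. i < n \<longrightarrow> (n, proj_op A n i) \<in> F) \<and>
     (\<forall>m n f g. (m, f) \<in> F \<and> (\<forall>i < m. (n, g i) \<in> F) \<longrightarrow> (n, comp_op A n m f g) \<in> F)"

definition Delta_s :: "'a set \<Rightarrow> (nat \<times> ('a list \<Rightarrow> 'a)) set \<Rightarrow> nat \<Rightarrow> bool" where
  "Delta_s A F n \<longleftrightarrow> (\<exists>i < n. \<forall>as \<in> tuples A n. card (set as) = n \<longrightarrow>
     (\<forall>a \<in> set as. \<exists>s. (n, s) \<in> F \<and> s as = a \<and>
        (\<forall>xs \<in> tuples A n. card (set xs) < n \<longrightarrow> s xs = xs ! i)))"

definition Inv :: "'a set \<Rightarrow> 'q set \<Rightarrow> (nat \<times> ('a list \<Rightarrow> 'a)) set \<Rightarrow> ('q \<Rightarrow> 'a) set set" where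
  "Inv A Q F = {H. H \<subseteq> Q \<rightarrow>\<^sub>E A \<and>
     (\<forall>m f h. (m, f) \<in> F \<and> (\<forall>i < m. h i \<in> H) \<longrightarrow>
        (\<lambda>q\<in>Q. f (map (\<lambda>i. h i q) [0..<m])) \<in> H)}"

definition weakly_separates :: "('q \<Rightarrow> 'a) set \<Rightarrow> 'q \<Rightarrow> 'q \<Rightarrow> 'a \<Rightarrow> bool" where
  "weakly_separates H p q a \<longleftrightarrow>
     (\<exists>h1 \<in> H. \<exists>h2 \<in> H. h1 p = a \<and> h2 p = a \<and> h1 q \<noteq> h2 q)"

definition strongly_separates :: "('q \<Rightarrow> 'a) set \<Rightarrow> 'q \<Rightarrow> 'q \<Rightarrow> 'a \<Rightarrow> bool" where
  "strongly_separates H p q a \<longleftrightarrow>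
     (\<forall>b \<in> (\<lambda>h. h q) ` H. \<exists>h \<in> H. h p = a \<and> h q = b)"

end

theory Submission
  imports Defs
begin

theorem lemma4:
  fixes A :: "'a set" and Q :: "'q set" and H :: "('q \<Rightarrow> 'a) set"
    and F :: "(nat \<times> ('a list \<Rightarrow> 'a)) set" and n :: nat and p q :: 'q and a :: 'a
  assumes "finite A" "A \<noteq> {}" "finite Q" "Q \<noteq> {}" "finite H" "H \<noteq> {}"
    and "H \<subseteq> Q \<rightarrow>\<^sub>E A"
    and "n \<ge> 3"
    and "clone A F" and "Delta_s A F n"
    and "H \<in> Inv A Q F"
    and "p \<in> Q" "q \<in> Q"
    and "a \<in> (\<lambda>h. h p) ` H"
    and "card ((\<lambda>h. h q) ` H) \<ge> n"
    and "weakly_separates H p q a"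
  shows "strongly_separates H p q a"
  unfolding strongly_separates_def
proof
  fix b assume bH: "b \<in> (\<lambda>h. h q) ` H"
  obtain h1 h2 where h1: "h1 \<in> H" "h1 p = a" and h2: "h2 \<in> H" "h2 p = a" and ne: "h1 q \<noteq> h2 q"
    using assms(16) unfolding weakly_separates_def by blast
  define c1 where "c1 = h1 q"
  define c2 where "c2 = h2 q"
  define HQ where "HQ = (\<lambda>h. h q) ` H"
  have c1H: "c1 \<in> HQ" and c2H: "c2 \<in> HQ" using h1 h2 unfolding c1_def c2_def HQ_def by auto
  have finHQ: "finite HQ" unfolding HQ_def using assms(5) by simp
  show "\<exists>h\<in>H. h p = a \<and> h q = b"
  proof (cases "b = c1 \<or> b = c2")
    case True then show ?thesis using h1 h2 c1_def c2_def by auto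
  next
    case False
    have bHQ: "b \<in> HQ" using bH HQ_def by simp
    have "card (HQ - {c1,c2,b}) = card HQ - 3"
      using False ne c1H c2H bHQ finHQ unfolding c1_def[symmetric] c2_def[symmetric]
      by (subst card_Diff_subset) (auto simp: c1_def c2_def)
    hence cge: "card (HQ - {c1,c2,b}) \<ge> n - 3" using assms(15) HQ_def by simp
    obtain W where W: "W \<subseteq> HQ - {c1,c2,b}" "card W = n - 3"
      using obtain_subset_with_card_n[OF cge] by blast
    have finW: "finite W" using W(1) finHQ finite_subset by blast
    define T where "T = insert b W"
    have cT: "card T = n - 2" proof -
      have "b \<notin> W" using W(1) by auto
      then show ?thesis using W finW assms(8) unfolding T_def by simp
    qed
    obtain i where i: "i < n" and Di: "\<forall>as \<in> tuples A n. card (set as) = n \<longrightarrow>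
     (\<forall>a \<in> set as. \<exists>s. (n, s) \<in> F \<and> s as = a \<and>
        (\<forall>xs \<in> tuples A n. card (set xs) < n \<longrightarrow> s xs = xs ! i))"
      using assms(10) unfolding Delta_s_def by blast
    define j where "j = (if i = 0 then 1 else (0::nat))"
    have j: "j < n" "j \<noteq> i" using assms(8) i unfolding j_def by auto
    define S where "S = {0..<n} - {i, j}"
    have cS: "card S = n - 2" unfolding S_def using i j by (subst card_Diff_subset) auto
    obtain f where f: "bij_betw f S T"
      using finite_same_card_bij[of S T] cS cT finW unfolding S_def T_def by auto
    define v where "v k = (if k = i then c1 else if k = j then c2 else f k)" for k
    have THQ: "T \<subseteq> HQ" using W bHQ unfolding T_def by auto
    have Tc: "c1 \<notin> T" "c2 \<notin> T" using W False unfolding T_def by auto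
    have vHQ: "v k \<in> HQ" if "k < n" for k
      using that c1H c2H f THQ unfolding v_def S_def bij_betw_def by auto
    have injv: "inj_on v {0..<n}"
    proof (rule inj_onI)
      fix x y assume x: "x \<in> {0..<n}" and y: "y \<in> {0..<n}" and e: "v x = v y"
      have fx: "x \<in> S \<Longrightarrow> f x \<in> T" and fy: "y \<in> S \<Longrightarrow> f y \<in> T"
        using f unfolding bij_betw_def by auto
      have "inj_on f S" using f bij_betw_def by blast
      note injf = this
      have vS: "v z = f z" if "z \<in> S" for z using that unfolding v_def S_def by auto
      have xc: "x \<in> S \<or> x = i \<or> x = j" and yc: "y \<in> S \<or> y = i \<or> y = j"
        using x y unfolding S_def by auto
      have vi: "v i = c1" and vj: "v j = c2" unfolding v_def using j by auto
      have c12: "c1 \<noteq> c2" using ne unfolding c1_def c2_def .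
      show "x = y"
        using xc yc
      proof (elim disjE)
        assume "x \<in> S" "y \<in> S" then show ?thesis using e vS injf by (metis inj_on_def)
      qed (use e vS vi vj fx fy Tc c12 in metis)+
    qed
    obtain k0 where k0: "k0 \<in> S" "f k0 = b" using f unfolding bij_betw_def T_def by (metis imageE insertI1)
    have vk0: "v k0 = b" using k0 unfolding v_def S_def by auto
    define g where "g k = (if k = i then h1 else if k = j then h2 else (SOME h. h \<in> H \<and> h q = v k))" for k
    have gH: "g k \<in> H \<and> g k q = v k" if "k < n" for k
    proof (cases "k = i \<or> k = j")
      case True then show ?thesis using h1 h2 j unfolding g_def v_def c1_def c2_def by auto
    next
      case False
      have "\<exists>h. h \<in> H \<and> h q = v k" using vHQ[OF that] unfolding HQ_def by auto
      then have "(SOME h. h \<in> H \<and> h q = v k) \<in> H \<and> (SOME h. h \<in> H \<and> h q = v k) q = v k"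
        by (rule someI_ex)
      moreover have "g k = (SOME h. h \<in> H \<and> h q = v k)" using False unfolding g_def by simp
      ultimately show ?thesis by simp
    qed
    have gA: "g k x \<in> A" if "k < n" "x \<in> Q" for k x
      using gH[OF that(1)] assms(7) that(2) by (auto simp: PiE_def Pi_def)
    define lq where "lq = map (\<lambda>k. g k q) [0..<n]"
    have lq: "lq = map v [0..<n]" unfolding lq_def using gH by auto
    have lqT: "lq \<in> tuples A n" unfolding lq_def tuples_def using gA assms(13) by auto
    have dq: "distinct lq" unfolding lq using injv by (simp add: distinct_map)
    have cq: "card (set lq) = n" using distinct_card[OF dq] unfolding lq_def by simp
    have bq: "b \<in> set lq" unfolding lq using k0 vk0 unfolding S_def by (metis DiffD1 atLeastLessThan_iff image_eqI set_map set_upt)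
    obtain s where s: "(n, s) \<in> F" "s lq = b"
      "\<forall>xs \<in> tuples A n. card (set xs) < n \<longrightarrow> s xs = xs ! i"
      using Di lqT cq bq by blast
    define lp where "lp = map (\<lambda>k. g k p) [0..<n]"
    have lpT: "lp \<in> tuples A n" unfolding lp_def tuples_def using gA assms(12) by auto
    have ndp: "\<not> distinct lp"
    proof
      assume "distinct lp"
      moreover have "lp ! i = lp ! j" unfolding lp_def using i j h1 h2 unfolding g_def by auto
      moreover have "length lp = n" unfolding lp_def by simp
      ultimately show False using i j nth_eq_iff_index_eq by metis
    qed
    have cp: "card (set lp) < n"
    proof -
      have "card (set lp) \<le> n" using card_length[of lp] unfolding lp_def by simp
      moreover have "card (set lp) \<noteq> n" using ndp card_distinct[of lp] unfolding lp_def by auto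
      ultimately show ?thesis by simp
    qed
    have lpi: "lp ! i = a" unfolding lp_def using i h1 by (simp add: g_def)
    have sp: "s lp = a" using s(3) lpT cp lpi by simp
    define k where "k = (\<lambda>x\<in>Q. s (map (\<lambda>t. g t x) [0..<n]))"
    have inv: "\<forall>m f h. (m, f) \<in> F \<and> (\<forall>i < m. h i \<in> H) \<longrightarrow>
        (\<lambda>q\<in>Q. f (map (\<lambda>i. h i q) [0..<m])) \<in> H" using assms(11) unfolding Inv_def by blast
    have "\<forall>t < n. g t \<in> H" using gH by blast
    then have "k \<in> H" using inv s(1) unfolding k_def by blast
    moreover have "k p = a" using sp assms(12) unfolding k_def lp_def by simp
    moreover have "k q = b" using s(2) assms(13) unfolding k_def lq_def by simp
    ultimately show ?thesis by blast
  qed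
qed

end
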